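(* Let $x_{21},\dots,x_{2n}$ be i.i.d. observations of a real random variable $X_2$ with distribution function $F_{X_2}$ and density $f_{X_2}$ bounded away from zero, let $\hat F_{X_2}$ be their empirical distribution function, let $p\ge3$ be a fixed odd integer, and for each $i$ with $(p-1)/2<\mathrm{rank}(x_{2i})\le n-(p-1)/2$ let $$W_i=\Big\{j:\ |\hat F_{X_2}(x_{2j})-\hat F_{X_2}(x_{2i})|\le\frac{p-1}{2n}\Big\}.$$ Then for any Lipschitz continuous function $g$, $$\frac1p\sum_{j=1}^n g(x_{2j})\,I(j\in W_i)-g(x_{2i})=O_p\Big(\frac{1}{\sqrt n}\Big)$$ uniformly in $i$.
   Context: $I(\cdot)$ denotes the indicator function; $\mathrm{rank}(x_{2i})$ is the position of $x_{2i}$ among the ordered sample, so that each $W_i$ consists of the indices of $x_{2i}$ and its $p-1$ nearest neighbours in rank. $O_p(a_n)$ uniformly in $i$ means that the maximum over $i$ of the absolute value, divided by $a_n$, is bounded in probability. *)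

theory Defs
  imports "HOL-Probability.Probability"
begin

definition ecdf :: "(nat \<Rightarrow> real) \<Rightarrow> nat \<Rightarrow> real \<Rightarrow> real" where
  "ecdf x n t = real (card {j \<in> {1..n}. x j \<le> t}) / real n"

definition rank :: "(nat \<Rightarrow> real) \<Rightarrow> nat \<Rightarrow> nat \<Rightarrow> nat" where
  "rank x n i = card {j \<in> {1..n}. x j \<le> x i}"

definition W :: "(nat \<Rightarrow> real) \<Rightarrow> nat \<Rightarrow> nat \<Rightarrow> nat \<Rightarrow> nat set" where
  "W x n p i = {j \<in> {1..n}. \<bar>ecdf x n (x j) - ecdf x n (x i)\<bar> \<le> (real p - 1) / (2 * real n)}"

definition admissible :: "(nat \<Rightarrow> real) \<Rightarrow> nat \<Rightarrow> nat \<Rightarrow> nat set" where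
  "admissible x n p = {i \<in> {1..n}. (real p - 1) / 2 < real (rank x n i)
                                 \<and> real (rank x n i) \<le> real n - (real p - 1) / 2}"

definition local_err :: "(real \<Rightarrow> real) \<Rightarrow> (nat \<Rightarrow> real) \<Rightarrow> nat \<Rightarrow> nat \<Rightarrow> nat \<Rightarrow> real" where
  "local_err g x n p i =
     (1 / real p) * (\<Sum>j\<in>{1..n}. g (x j) * indicator (W x n p i) j) - g (x i)"

definition max_err :: "(real \<Rightarrow> real) \<Rightarrow> (nat \<Rightarrow> real) \<Rightarrow> nat \<Rightarrow> nat \<Rightarrow> real" where
  "max_err g x n p = Max (insert 0 ((\<lambda>i. \<bar>local_err g x n p i\<bar>) ` admissible x n p))"

definition bounded_in_prob :: "'a measure \<Rightarrow> (nat \<Rightarrow> 'a \<Rightarrow> real) \<Rightarrow> bool" where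
  "bounded_in_prob M Y \<longleftrightarrow>
     (\<forall>\<epsilon>>0. \<exists>K. eventually (\<lambda>n. measure M {\<omega> \<in> space M. \<bar>Y n \<omega>\<bar> > K} < \<epsilon>) sequentially)"

definition big_Op :: "'a measure \<Rightarrow> (nat \<Rightarrow> 'a \<Rightarrow> real) \<Rightarrow> (nat \<Rightarrow> real) \<Rightarrow> bool" where
  "big_Op M Y a \<longleftrightarrow> bounded_in_prob M (\<lambda>n \<omega>. Y n \<omega> / a n)"

end

theory Submission
  imports Defs
begin


lemma numeric:
  fixes s c d A P q m :: real
  assumes s: "s \<ge> 1" and c: "c > 0" and d: "d > 0" and P: "P \<ge> 1" and A: "A \<ge> 1"
    and m: "m > 0" "m \<le> A * s" and q: "q \<ge> s^2/P - 1" and sP: "s^2 \<ge> P"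
  shows "m * P * exp (-(c * (d/m) * q)) \<le> (2 * A * P * exp (c * d/A) / (c * d/(A * P))^2) / s"
proof -
  define E where "E = c * d/(A * P)"
  define C0 where "C0 = c * d/A"
  have E: "E > 0" unfolding E_def using c d A P by simp
  have C0: "C0 > 0" unfolding C0_def using c d A by simp
  have h: "d/m \<ge> d/(A * s)" using d m by (intro divide_left_mono) auto
  define r where "r = s^2/P - 1"
  have r: "r \<ge> 0" unfolding r_def using sP P by (simp add: field_simps)
  have "c * (d/m) * q \<ge> c * (d/m) * r" using q c d m unfolding r_def by (intro mult_left_mono) auto
  moreover have "c * (d/m) * r \<ge> c * (d/(A * s)) * r" using h c r by (intro mult_right_mono mult_left_mono) auto
  moreover have "c * (d/(A * s)) * r = E * s - C0 / s"
    unfolding r_def E_def C0_def using s A P by (simp add: field_simps power2_eq_square)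
  moreover have "C0 / s \<le> C0" using s C0 by (simp add: divide_le_eq)
  ultimately have key: "c * (d/m) * q \<ge> E * s - C0" by linarith
  have e1: "exp (-(c * (d/m) * q)) \<le> exp C0 * exp (-(E * s))"
    using key by (simp add: exp_add[symmetric])
  have "1 + E * s + (E * s)^2/2 \<le> exp (E * s)" using E s by (intro exp_lower_Taylor_quadratic) simp
  moreover have "0 \<le> E * s" using E s by simp
  ultimately have "(E * s)^2/2 \<le> exp (E * s)" by linarith
  hence e2: "exp (-(E * s)) \<le> 2/(E * s)^2" using E s
    by (simp add: exp_minus field_simps)
  have "m * P * exp (-(c * (d/m) * q)) \<le> (A * s) * P * (exp C0 * (2/(E * s)^2))"
  proof (intro mult_mono)
    show "exp (-(c * (d/m) * q)) \<le> exp C0 * (2/(E * s)^2)"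
      using e1 e2 by (meson exp_gt_zero mult_left_mono order.trans less_imp_le)
  qed (use m P A s in auto)
  also have "\<dots> = (2 * A * P * exp C0 / E^2) / s" using s E by (simp add: field_simps power2_eq_square)
  finally show ?thesis unfolding E_def C0_def .
qed



lemma ecdf_rank: "ecdf x n (x j) = real (rank x n j) / real n"
  by (simp add: ecdf_def rank_def)

lemma rank_ge1: "i \<in> {1..n} \<Longrightarrow> 1 \<le> rank x n i"
  unfolding rank_def
  by (metis (mono_tags, lifting) One_nat_def Suc_leI card_gt_0_iff empty_iff finite_atLeastAtMost finite_subset mem_Collect_eq order_refl subsetI)

lemma rank_le: "rank x n i \<le> n"
proof -
  have "rank x n i \<le> card {1..n}" unfolding rank_def by (rule card_mono) auto
  thus ?thesis by simp
qed

lemma rank_split: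
  assumes "x i \<le> x j"
  shows "rank x n j = rank x n i + card {k\<in>{1..n}. x i < x k \<and> x k \<le> x j}"
proof -
  have e: "{k\<in>{1..n}. x k \<le> x j} = {k\<in>{1..n}. x k \<le> x i} \<union> {k\<in>{1..n}. x i < x k \<and> x k \<le> x j}"
    using assms by auto
  show ?thesis unfolding rank_def e
    by (subst card_Un_disjoint) auto
qed

lemma rank_strict:
  assumes "j \<in> {1..n}" "x i < x j"
  shows "rank x n i < rank x n j"
proof -
  have "card {k\<in>{1..n}. x i < x k \<and> x k \<le> x j} > 0"
    using assms by (subst card_gt_0_iff) auto
  thus ?thesis using rank_split[of x i j n] assms by simp
qed

lemma rank_bij:
  assumes "inj_on x {1..n}"
  shows "bij_betw (rank x n) {1..n} {1..n}"
proof -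
  have inj: "inj_on (rank x n) {1..n}"
  proof (rule inj_onI)
    fix i j assume ij: "i \<in> {1..n}" "j \<in> {1..n}" "rank x n i = rank x n j"
    show "i = j"
    proof (rule ccontr)
      assume "i \<noteq> j"
      hence "x i \<noteq> x j" using assms ij by (meson inj_onD)
      hence "x i < x j \<or> x j < x i" by linarith
      thus False using rank_strict[of j n x i] rank_strict[of i n x j] ij by auto
    qed
  qed
  have sub: "rank x n ` {1..n} \<subseteq> {1..n}" using rank_ge1 rank_le by fastforce
  have "card (rank x n ` {1..n}) = card {1..n}" using card_image[OF inj] by simp
  hence "rank x n ` {1..n} = {1..n}" using sub by (intro card_subset_eq) auto
  thus ?thesis using inj unfolding bij_betw_def by simp
qed

lemma W_rank:
  assumes "n > 0"
  shows "W x n p i = {j\<in>{1..n}. \<bar>real (rank x n j) - real (rank x n i)\<bar> \<le> (real p - 1) / 2}"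
proof -
  have "\<And>j. (\<bar>real (rank x n j) / real n - real (rank x n i) / real n\<bar> \<le> (real p - 1) / (2 * real n))
     \<longleftrightarrow> (\<bar>real (rank x n j) - real (rank x n i)\<bar> \<le> (real p - 1) / 2)"
  proof -
    fix j
    have "\<bar>real (rank x n j) / real n - real (rank x n i) / real n\<bar> = \<bar>real (rank x n j) - real (rank x n i)\<bar> / real n"
      using assms by (simp add: diff_divide_distrib[symmetric])
    moreover have "(real p - 1) / (2 * real n) = ((real p - 1) / 2) / real n" by simp
    moreover have "\<And>u v. (u / real n \<le> v / real n) = (u \<le> v)" using assms by (simp add: divide_le_cancel)
    ultimately show "?thesis j" by metis
  qed
  thus ?thesis unfolding W_def ecdf_rank by simp
qed

lemma card_W:
  assumes inj: "inj_on x {1..n}" and adm: "i \<in> admissible x n p" and odd: "odd p"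
  shows "card (W x n p i) = p"
proof -
  obtain q where p: "p = 2 * q+1" using odd by (metis oddE)
  let ?r = "Defs.rank x n i"
  have i: "i \<in> {1..n}" and a1: "(real p - 1)/2 < real ?r" and a2: "real ?r \<le> real n - (real p - 1)/2"
    using adm unfolding admissible_def by auto
  have n: "n > 0" using i by auto
  have rq: "q < ?r" "?r + q \<le> n" using a1 a2 p by auto
  let ?S = "{?r - q .. ?r + q}"
  have bij: "bij_betw (Defs.rank x n) {1..n} {1..n}" by (rule rank_bij[OF inj])
  have Weq: "W x n p i = {j\<in>{1..n}. Defs.rank x n j \<in> ?S}"
  proof -
    have "\<And>j. (\<bar>real (Defs.rank x n j) - real ?r\<bar> \<le> (real p - 1) / 2) = (Defs.rank x n j \<in> ?S)"
      using p rq by auto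
    thus ?thesis unfolding W_rank[OF n] by simp
  qed
  have Ssub: "?S \<subseteq> {1..n}" using rq by auto
  have img: "Defs.rank x n ` (W x n p i) = ?S"
  proof
    show "Defs.rank x n ` W x n p i \<subseteq> ?S" unfolding Weq by auto
    show "?S \<subseteq> Defs.rank x n ` W x n p i"
    proof
      fix r assume r: "r \<in> ?S"
      hence "r \<in> Defs.rank x n ` {1..n}" using Ssub bij unfolding bij_betw_def by auto
      then obtain j where "j \<in> {1..n}" "r = Defs.rank x n j" by auto
      thus "r \<in> Defs.rank x n ` W x n p i" unfolding Weq using r by auto
    qed
  qed
  have "bij_betw (Defs.rank x n) (W x n p i) ?S"
    by (rule bij_betw_subset[OF bij _ img]) (auto simp: W_def)
  hence "card (W x n p i) = card ?S" by (rule bij_betw_same_card)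
  also have "\<dots> = p" using p rq by simp
  finally show ?thesis .
qed

lemma far_rank:
  fixes x :: "nat \<Rightarrow> real" and h :: real
  assumes inrange: "\<forall>k\<in>{1..n}. x k \<in> {a..b}" and h: "h > 0" and m: "real m * h = b - a"
    and bins: "\<forall>t<m. p \<le> card {k\<in>{1..n}. x k \<in> {a + real t * h .. a + real (t+1) * h}}"
    and ij: "i \<in> {1..n}" "j \<in> {1..n}" and far: "x i + 2 * h < x j"
  shows "Defs.rank x n i + p \<le> Defs.rank x n j"
proof -
  define t where "t = nat \<lfloor>(x i - a)/h\<rfloor> + 1"
  have xi: "a \<le> x i" "x j \<le> b" using inrange ij by auto
  have fl0: "0 \<le> \<lfloor>(x i - a)/h\<rfloor>" using xi h by simp
  have tr: "real t = real_of_int \<lfloor>(x i - a)/h\<rfloor> + 1" using fl0 unfolding t_def by simp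
  have lo: "x i < a + real t * h"
  proof -
    have "(x i - a)/h < real t" using tr by linarith
    hence "x i - a < real t * h" using h by (simp add: divide_less_eq)
    thus ?thesis by simp
  qed
  have hi: "a + real (t+1) * h \<le> x i + 2 * h"
  proof -
    have "real (t+1) \<le> (x i - a)/h + 2" using tr by linarith
    hence "real (t+1) * h \<le> ((x i - a)/h + 2) * h" using h by (intro mult_right_mono) auto
    also have "\<dots> = x i - a + 2 * h" using h by (simp add: field_simps)
    finally show ?thesis by simp
  qed
  have "real (t+1) * h < real m * h" using hi far xi m by linarith
  hence "t + 1 < m" using h by (simp add: mult_less_cancel_right)
  hence cardb: "p \<le> card {k\<in>{1..n}. x k \<in> {a + real t * h .. a + real (t+1) * h}}" using bins by auto
  have "{k\<in>{1..n}. x k \<in> {a + real t * h .. a + real (t+1) * h}} \<subseteq> {k\<in>{1..n}. x i < x k \<and> x k \<le> x j}"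
    using lo hi far by auto
  hence "card {k\<in>{1..n}. x k \<in> {a + real t * h .. a + real (t+1) * h}} \<le> card {k\<in>{1..n}. x i < x k \<and> x k \<le> x j}"
    by (intro card_mono) auto
  moreover have "x i \<le> x j" using far h by simp
  ultimately show ?thesis using cardb rank_split[of x i j n] by simp
qed

lemma err_bound:
  fixes x :: "nat \<Rightarrow> real" and h :: real
  assumes inj: "inj_on x {1..n}"
    and inrange: "\<forall>k\<in>{1..n}. x k \<in> {a..b}" and h: "h > 0" and m: "real m * h = b - a"
    and bins: "\<forall>t<m. p \<le> card {k\<in>{1..n}. x k \<in> {a + real t * h .. a + real (t+1) * h}}"
    and adm: "i \<in> admissible x n p" and odd: "odd p" and p3: "p \<ge> 3"
    and lip: "L-lipschitz_on UNIV g"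
  shows "\<bar>local_err g x n p i\<bar> \<le> 2 * L * h"
proof -
  have i: "i \<in> {1..n}" using adm unfolding admissible_def by auto
  have n: "n > 0" using i by auto
  have L0: "0 \<le> L" using lip by (rule lipschitz_on_nonneg)
  have Wsub: "W x n p i \<subseteq> {1..n}" unfolding W_def by auto
  have close: "\<bar>x j - x i\<bar> \<le> 2 * h" if j: "j \<in> W x n p i" for j
  proof (rule ccontr)
    assume "\<not> ?thesis"
    hence "x i + 2 * h < x j \<or> x j + 2 * h < x i" by linarith
    hence "Defs.rank x n i + p \<le> Defs.rank x n j \<or> Defs.rank x n j + p \<le> Defs.rank x n i"
      using far_rank[OF inrange h m bins i] far_rank[OF inrange h m bins _ i] j Wsub by blast
    hence "\<bar>real (Defs.rank x n j) - real (Defs.rank x n i)\<bar> \<ge> real p" by linarith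
    moreover have "\<bar>real (Defs.rank x n j) - real (Defs.rank x n i)\<bar> \<le> (real p - 1)/2"
      using j unfolding W_rank[OF n] by auto
    moreover have "real p \<ge> 3" using p3 by simp
    ultimately have "real p \<le> (real p - 1)/2" by (meson order_trans)
    thus False using \<open>real p \<ge> 3\<close> by (simp add: field_simps)
  qed
  have cW: "card (W x n p i) = p" by (rule card_W[OF inj adm odd])
  have sumW: "(\<Sum>j\<in>{1..n}. g (x j) * indicator (W x n p i) j) = (\<Sum>j\<in>W x n p i. g (x j))"
    using Wsub by (simp add: sum.inter_restrict[symmetric] Int_absorb1 indicator_def if_distrib cong: if_cong)
  have "local_err g x n p i = (1/real p) * (\<Sum>j\<in>W x n p i. g (x j) - g (x i))"
    using cW p3 unfolding local_err_def sumW by (simp add: sum_subtractf field_simps)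
  hence "\<bar>local_err g x n p i\<bar> = (1/real p) * \<bar>\<Sum>j\<in>W x n p i. g (x j) - g (x i)\<bar>"
    by (simp add: abs_mult)
  also have "\<dots> \<le> (1/real p) * (\<Sum>j\<in>W x n p i. \<bar>g (x j) - g (x i)\<bar>)"
    by (intro mult_left_mono sum_abs) auto
  also have "\<dots> \<le> (1/real p) * (\<Sum>j\<in>W x n p i. 2 * L * h)"
  proof (intro mult_left_mono sum_mono)
    fix j assume j: "j \<in> W x n p i"
    have "\<bar>g (x j) - g (x i)\<bar> \<le> L * \<bar>x j - x i\<bar>"
      using lipschitz_onD[OF lip, of "x j" "x i"] by (simp add: dist_real_def)
    also have "\<dots> \<le> L * (2 * h)" using close[OF j] L0 by (intro mult_left_mono) auto
    finally show "\<bar>g (x j) - g (x i)\<bar> \<le> 2 * L * h" by simp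
  qed auto
  also have "\<dots> = 2 * L * h" using cW p3 by simp
  finally show ?thesis .
qed

lemma max_err_bound:
  fixes x :: "nat \<Rightarrow> real" and h :: real
  assumes inj: "inj_on x {1..n}"
    and inrange: "\<forall>k\<in>{1..n}. x k \<in> {a..b}" and h: "h > 0" and m: "real m * h = b - a"
    and bins: "\<forall>t<m. p \<le> card {k\<in>{1..n}. x k \<in> {a + real t * h .. a + real (t+1) * h}}"
    and odd: "odd p" and p3: "p \<ge> 3"
    and lip: "L-lipschitz_on UNIV g"
  shows "max_err g x n p \<le> 2 * L * h"
proof -
  have L0: "0 \<le> L" using lip by (rule lipschitz_on_nonneg)
  have fin: "finite (admissible x n p)" unfolding admissible_def by auto
  show ?thesis unfolding max_err_def
    using err_bound[OF inj inrange h m bins _ odd p3 lip] fin L0 h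
    by (subst Max_le_iff) auto
qed



lemma rv_X:
  assumes "distributed M lborel Y f"
  shows "Y \<in> borel_measurable M"
  using assms unfolding distributed_def measurable_lborel1 by auto

lemma outside_null:
  fixes Y :: "'a \<Rightarrow> real"
  assumes "prob_space M" "distributed M lborel Y f" "\<And>x. x \<notin> {a..b} \<Longrightarrow> f x = 0"
  shows "measure M (Y -` (- {a..b}) \<inter> space M) = 0"
proof -
  have "emeasure M (Y -` (- {a..b}) \<inter> space M) = (\<integral>\<^sup>+x. f x * indicator (- {a..b}) x \<partial>lborel)"
    by (rule distributed_emeasure[OF assms(2)]) (auto intro!: borel_comp borel_closed)
  also have "\<dots> = (\<integral>\<^sup>+(x::real). 0 \<partial>lborel)"
    by (intro nn_integral_cong) (use assms(3) in \<open>auto simp: indicator_def\<close>)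
  finally show ?thesis by (simp add: measure_def)
qed

lemma bin_prob:
  fixes Y :: "'a \<Rightarrow> real"
  assumes "prob_space M" "distributed M lborel Y f" "\<And>x. x \<in> {a..b} \<Longrightarrow> f x \<ge> ennreal c"
    and "c > 0" "a \<le> s" "s + h \<le> b" "h \<ge> 0"
  shows "c * h \<le> measure M (Y -` {s..s+h} \<inter> space M)"
proof -
  interpret prob_space M by fact
  have "emeasure M (Y -` {s..s+h} \<inter> space M) = (\<integral>\<^sup>+x. f x * indicator {s..s+h} x \<partial>lborel)"
    by (rule distributed_emeasure[OF assms(2)]) auto
  also have "\<dots> \<ge> (\<integral>\<^sup>+x. ennreal c * indicator {s..s+h} x \<partial>lborel)"
    using assms by (intro nn_integral_mono) (auto simp: indicator_def)
  moreover have "(\<integral>\<^sup>+x. ennreal c * indicator {s..s+h} x \<partial>lborel) = ennreal c * ennreal h"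
    using assms by (simp add: nn_integral_cmult_indicator)
  ultimately have "ennreal (c * h) \<le> ennreal (measure M (Y -` {s..s+h} \<inter> space M))"
    using assms by (simp add: emeasure_eq_measure ennreal_mult)
  thus ?thesis by (simp add: ennreal_le_iff)
qed

lemma singleton_null:
  fixes Y :: "'a \<Rightarrow> real"
  assumes "distributed M lborel Y f"
  shows "emeasure (distr M borel Y) {u} = 0"
proof -
  have Y: "Y \<in> borel_measurable M" by (rule rv_X[OF assms])
  have "emeasure (distr M borel Y) {u} = emeasure M (Y -` {u} \<inter> space M)"
    using Y by (simp add: emeasure_distr)
  also have "\<dots> = (\<integral>\<^sup>+x. f x * indicator {u} x \<partial>lborel)"
    by (rule distributed_emeasure[OF assms]) auto
  also have "\<dots> = (\<integral>\<^sup>+(x::real). 0 \<partial>lborel)"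
  proof (rule nn_integral_cong_AE)
    show "AE x in lborel. f x * indicator {u} x = 0"
      using AE_lborel_singleton[of u] by (rule AE_mp) auto
  qed
  finally show ?thesis by simp
qed

lemma ties_null:
  fixes X :: "nat \<Rightarrow> 'a \<Rightarrow> real"
  assumes P: "prob_space M" and ind: "prob_space.indep_vars M (\<lambda>_. borel) X UNIV"
    and dist: "\<And>k. distributed M lborel (X k) f" and jk: "j \<noteq> k"
  shows "measure M {\<omega>\<in>space M. X j \<omega> = X k \<omega>} = 0"
proof -
  interpret prob_space M by fact
  have "indep_var
    borel ((\<lambda>g. g j) \<circ> (\<lambda>\<omega>. restrict (\<lambda>i. X i \<omega>) {j}))
    borel ((\<lambda>g. g k) \<circ> (\<lambda>\<omega>. restrict (\<lambda>i. X i \<omega>) {k}))"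
    using jk by (intro indep_var_compose[OF indep_var_restrict[OF ind]] measurable_component_singleton) auto
  also have "((\<lambda>g. g j) \<circ> (\<lambda>\<omega>. restrict (\<lambda>i. X i \<omega>) {j})) = X j" by auto
  also have "((\<lambda>g. g k) \<circ> (\<lambda>\<omega>. restrict (\<lambda>i. X i \<omega>) {k})) = X k" by auto
  finally have iv: "indep_var borel (X j) borel (X k)" .
  hence eq: "distr M borel (X j) \<Otimes>\<^sub>M distr M borel (X k) = distr M (borel \<Otimes>\<^sub>M borel) (\<lambda>x. (X j x, X k x))"
    by (simp add: indep_var_distribution_eq)
  define D where "D = {x::real\<times>real. fst x = snd x}"
  have Dc: "closed D" unfolding D_def
    by (intro closed_Collect_eq continuous_intros)
  have Ds: "D \<in> sets (borel \<Otimes>\<^sub>M borel)" unfolding borel_prod using Dc by auto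
  have Xj: "X j \<in> borel_measurable M" and Xk: "X k \<in> borel_measurable M" using rv_X[OF dist] by auto
  have pm: "(\<lambda>x. (X j x, X k x)) \<in> measurable M (borel \<Otimes>\<^sub>M borel)" using Xj Xk by (rule measurable_Pair)
  have "emeasure M {\<omega>\<in>space M. X j \<omega> = X k \<omega>} = emeasure M ((\<lambda>x. (X j x, X k x)) -` D \<inter> space M)"
    by (rule arg_cong[where f="emeasure M"]) (auto simp: D_def)
  also have "\<dots> = emeasure (distr M (borel \<Otimes>\<^sub>M borel) (\<lambda>x. (X j x, X k x))) D"
    using pm Ds by (simp add: emeasure_distr)
  also have "\<dots> = emeasure (distr M borel (X j) \<Otimes>\<^sub>M distr M borel (X k)) D" by (simp add: eq)
  also have "\<dots> = (\<integral>\<^sup>+u. emeasure (distr M borel (X k)) (Pair u -` D) \<partial>distr M borel (X j))"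
  proof (rule sigma_finite_measure.emeasure_pair_measure_alt)
    show "sigma_finite_measure (distr M borel (X k))"
      using prob_space_distr[OF Xk] by (rule prob_space_imp_sigma_finite)
    show "D \<in> sets (distr M borel (X j) \<Otimes>\<^sub>M distr M borel (X k))" using Ds by simp
  qed
  also have "\<dots> = (\<integral>\<^sup>+u. 0 \<partial>distr M borel (X j))"
  proof (intro nn_integral_cong)
    fix u
    have "Pair u -` D = {u}" by (auto simp: D_def)
    thus "emeasure (distr M borel (X k)) (Pair u -` D) = 0" using singleton_null[OF dist] by simp
  qed
  finally show ?thesis by (simp add: measure_def)
qed

lemma block_miss:
  fixes X :: "nat \<Rightarrow> 'a \<Rightarrow> real"
  assumes P: "prob_space M" and ind: "prob_space.indep_vars M (\<lambda>_. borel) X UNIV"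
    and J: "finite J" "J \<noteq> {}" and B: "B \<in> sets borel"
  shows "measure M (\<Inter>k\<in>J. X k -` (- B) \<inter> space M) = (\<Prod>k\<in>J. measure M (X k -` (- B) \<inter> space M))"
proof -
  interpret prob_space M by fact
  have "indep_sets (\<lambda>i. {X i -` A \<inter> space M | A. A \<in> sets borel}) UNIV"
    using ind unfolding indep_vars_def2 by auto
  thus ?thesis
    by (rule indep_setsD) (use J B in \<open>blast intro: borel_comp\<close>)+
qed



lemma bins_filled:
  fixes x :: "nat \<Rightarrow> real"
  assumes blk: "\<forall>\<sigma><p. \<exists>k\<in>{\<sigma>* q+1..\<sigma>* q+q}. x k \<in> B" and pq: "p * q \<le> n"
  shows "p \<le> card {k\<in>{1..n}. x k \<in> B}"
proof -
  obtain K where K: "\<And>\<sigma>. \<sigma> < p \<Longrightarrow> K \<sigma> \<in> {\<sigma>* q+1..\<sigma>* q+q} \<and> x (K \<sigma>) \<in> B"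
    using blk by metis
  have inj: "inj_on K {..<p}"
  proof (rule inj_onI)
    fix \<sigma> \<tau> assume st: "\<sigma> \<in> {..<p}" "\<tau> \<in> {..<p}" "K \<sigma> = K \<tau>"
    show "\<sigma> = \<tau>"
    proof (rule ccontr)
      assume ne: "\<sigma> \<noteq> \<tau>"
      { fix u v assume uv: "u < v" "u < p" "v < p" "K u = K v"
        have "K u \<le> u * q+q" using K[OF uv(2)] by auto
        also have "\<dots> = (u+1)* q" by simp
        also have "\<dots> \<le> v * q" using uv(1) by (intro mult_right_mono) auto
        also have "\<dots> < K v" using K[OF uv(3)] by auto
        finally have False using uv(4) by simp }
      thus False using ne st by (metis lessThan_iff nat_neq_iff)
    qed
  qed
  have sub: "K ` {..<p} \<subseteq> {k\<in>{1..n}. x k \<in> B}"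
  proof
    fix k assume "k \<in> K ` {..<p}"
    then obtain \<sigma> where s: "\<sigma> < p" "k = K \<sigma>" by auto
    have "\<sigma>* q+q = (\<sigma>+1)* q" by simp
    also have "\<dots> \<le> p * q" using s by (intro mult_right_mono) auto
    finally show "k \<in> {k\<in>{1..n}. x k \<in> B}" using K[OF s(1)] s pq by auto
  qed
  have "p = card (K ` {..<p})" using card_image[OF inj] by simp
  also have "\<dots> \<le> card {k\<in>{1..n}. x k \<in> B}" using sub by (intro card_mono) auto
  finally show ?thesis .
qed



theorem lemma5:
  fixes M :: "'a measure" and X :: "nat \<Rightarrow> 'a \<Rightarrow> real" and f :: "real \<Rightarrow> ennreal"
    and g :: "real \<Rightarrow> real" and p :: nat and a b c L :: real
  assumes "prob_space M"
    and "prob_space.indep_vars M (\<lambda>_. borel) X UNIV"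
    and "\<And>k. distributed M lborel (X k) f"
    and "a < b" and "c > 0"
    and "\<And>x. x \<in> {a..b} \<Longrightarrow> f x \<ge> ennreal c"
    and "\<And>x. x \<notin> {a..b} \<Longrightarrow> f x = 0"
    and "odd p" and "p \<ge> 3"
    and "L-lipschitz_on UNIV g"
  shows "big_Op M (\<lambda>n \<omega>. max_err g (\<lambda>k. X k \<omega>) n p) (\<lambda>n. 1 / sqrt (real n))"
proof -
  interpret P: prob_space M by fact
  note PM = assms(1) and ind = assms(2) and dist = assms(3) and ab = assms(4) and c = assms(5)
    and fge = assms(6) and f0 = assms(7) and oddp = assms(8) and p3 = assms(9)
  define L' where "L' = max L 1"
  have lip': "L'-lipschitz_on UNIV g" using assms(10) by (rule lipschitz_on_mono) (auto simp: L'_def)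
  have L'1: "L' \<ge> 1" unfolding L'_def by simp
  define d where "d = b - a"
  have d: "d > 0" using ab unfolding d_def by simp
  define A where "A = 2 * L' * d + 1"
  have A1: "A \<ge> 1" unfolding A_def using L'1 d by simp
  define G where "G = 2 * A * real p * exp (c * d/A) / (c * d/(A * real p))^2"
  have G0: "G \<ge> 0" unfolding G_def using A1 by simp
  have Xm: "\<And>k. X k \<in> borel_measurable M" using rv_X[OF dist] by auto
  show ?thesis unfolding big_Op_def bounded_in_prob_def
  proof (intro allI impI)
    fix \<epsilon> :: real assume eps: "\<epsilon> > 0"
    define N where "N = p + nat \<lceil>(G/\<epsilon>)^2\<rceil> + 1"
    have Np: "N \<ge> p" unfolding N_def by simp
    have NG: "real N > (G/\<epsilon>)^2" unfolding N_def by linarith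
    show "\<exists>K. eventually (\<lambda>n. measure M {\<omega> \<in> space M. \<bar>max_err g (\<lambda>k. X k \<omega>) n p / (1 / sqrt (real n))\<bar> > K} < \<epsilon>) sequentially"
    proof (intro exI[of _ 1])
      show "eventually (\<lambda>n. measure M {\<omega> \<in> space M. \<bar>max_err g (\<lambda>k. X k \<omega>) n p / (1 / sqrt (real n))\<bar> > 1} < \<epsilon>) sequentially"
        unfolding eventually_sequentially
      proof (intro exI[of _ N] allI impI)
        fix n assume nN: "N \<le> n"
        have np: "n \<ge> p" using nN Np by simp
        define s where "s = sqrt (real n)"
        have s1: "s \<ge> 1" unfolding s_def using np p3 by simp
        have s2: "s^2 = real n" unfolding s_def by simp
        define m where "m = nat \<lceil>2 * L' * d * s\<rceil>"
        have mge: "real m \<ge> 2 * L' * d * s" unfolding m_def by linarith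
        have pos: "2 * L' * d * s > 0" by (intro mult_pos_pos) (use L'1 d s1 in auto)
        have mpos: "real m > 0" using mge pos by linarith
        have mle: "real m \<le> A * s"
        proof -
          have "real m = real_of_int \<lceil>2 * L' * d * s\<rceil>" unfolding m_def using pos by simp
          also have "\<dots> \<le> 2 * L' * d * s + 1" by (rule of_int_ceiling_le_add_one)
          also have "\<dots> \<le> A * s" unfolding A_def using s1 by (simp add: algebra_simps)
          finally show ?thesis .
        qed
        define h where "h = d / real m"
        have h: "h > 0" unfolding h_def using d mpos by simp
        have mh: "real m * h = b - a" unfolding h_def d_def using mpos by simp
        have hL: "2 * L' * h \<le> 1/s"
        proof -
          have pp: "0 < (2 * L' * d * s) * real m" using pos mpos by simp
          have "h \<le> d / (2 * L' * d * s)" unfolding h_def using d mge pp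
            by (intro divide_left_mono) auto
          also have "\<dots> = 1/(2 * L' * s)" using d by simp
          finally show ?thesis using L'1 s1 by (simp add: field_simps)
        qed
        define q where "q = n div p"
        have pq: "p * q \<le> n" unfolding q_def by simp
        have q1: "q \<ge> 1"
        proof -
          have "0 < n div p" using np p3 by (simp add: div_greater_zero_iff)
          thus ?thesis unfolding q_def by simp
        qed
        have qr: "real q \<ge> s^2/real p - 1"
        proof -
          have e: "n = q * p + n mod p" unfolding q_def by simp
          have "n mod p < p" using p3 by simp
          hence "n < p * q + p" using e by (metis add_less_cancel_left mult.commute)
          hence "real n < real p * real q + real p" by (metis of_nat_add of_nat_less_iff of_nat_mult)
          hence "real n / real p < real q + 1" using p3 by (simp add: field_simps)
          thus ?thesis using s2 by simp
        qed
        define bin where "bin t = {a + real t * h .. a + real (t+1)* h}" for t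
        define blk where "blk \<sigma> = {\<sigma>* q+1..\<sigma>* q+q}" for \<sigma>
        define T where "T = (\<Union>j\<in>{1..n}. \<Union>k\<in>{1..n}-{j}. {\<omega>\<in>space M. X j \<omega> = X k \<omega>})"
        define U where "U = (\<Union>k\<in>{1..n}. X k -` (-{a..b}) \<inter> space M)"
        define V where "V = (\<Union>t\<in>{..<m}. \<Union>\<sigma>\<in>{..<p}. \<Inter>k\<in>blk \<sigma>. X k -` (- bin t) \<inter> space M)"
        have eqs: "\<And>j k. {\<omega>\<in>space M. X j \<omega> = X k \<omega>} \<in> sets M"
          using Xm by measurable
        have pre: "\<And>k S. S \<in> sets borel \<Longrightarrow> X k -` S \<inter> space M \<in> sets M"
          using Xm by (simp add: measurable_sets)
        have binb: "\<And>t. bin t \<in> sets borel" "\<And>t. - bin t \<in> sets borel" unfolding bin_def by auto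
        have blkne: "\<And>\<sigma>. blk \<sigma> \<noteq> {}" "\<And>\<sigma>. finite (blk \<sigma>)" unfolding blk_def using q1 by auto
        have Ts: "T \<in> sets M" unfolding T_def using eqs by (intro sets.finite_UN) auto
        have Us: "U \<in> sets M" unfolding U_def using pre by (intro sets.finite_UN) (auto intro!: borel_comp)
        have Vs: "V \<in> sets M" unfolding V_def using pre binb blkne
          by (intro sets.finite_UN sets.finite_INT) auto
        have sub: "{\<omega> \<in> space M. \<bar>max_err g (\<lambda>k. X k \<omega>) n p / (1 / sqrt (real n))\<bar> > 1} \<subseteq> T \<union> U \<union> V"
        proof
          fix \<omega> assume \<omega>: "\<omega> \<in> {\<omega> \<in> space M. \<bar>max_err g (\<lambda>k. X k \<omega>) n p / (1 / sqrt (real n))\<bar> > 1}"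
          show "\<omega> \<in> T \<union> U \<union> V"
          proof (rule ccontr)
            assume nt: "\<omega> \<notin> T \<union> U \<union> V"
            have sp: "\<omega> \<in> space M" using \<omega> by auto
            have inj: "inj_on (\<lambda>k. X k \<omega>) {1..n}"
              using nt sp unfolding T_def inj_on_def by blast
            have rng: "\<forall>k\<in>{1..n}. X k \<omega> \<in> {a..b}" using nt sp unfolding U_def by blast
            have bins: "\<forall>t<m. p \<le> card {k\<in>{1..n}. X k \<omega> \<in> {a + real t * h .. a + real (t+1) * h}}"
            proof (intro allI impI)
              fix t assume t: "t < m"
              have "\<forall>\<sigma><p. \<exists>k\<in>{\<sigma>* q+1..\<sigma>* q+q}. X k \<omega> \<in> bin t"
                using nt sp t unfolding V_def blk_def by blast
              from bins_filled[OF this pq] show "p \<le> card {k\<in>{1..n}. X k \<omega> \<in> {a + real t * h .. a + real (t+1) * h}}"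
                unfolding bin_def .
            qed
            have me: "max_err g (\<lambda>k. X k \<omega>) n p \<le> 2 * L' * h"
              by (rule max_err_bound[OF inj rng h mh bins oddp p3 lip'])
            have me0: "0 \<le> max_err g (\<lambda>k. X k \<omega>) n p" unfolding max_err_def
              by (rule Max_ge) (auto simp: admissible_def)
            have "\<bar>max_err g (\<lambda>k. X k \<omega>) n p / (1 / sqrt (real n))\<bar> = max_err g (\<lambda>k. X k \<omega>) n p * s"
              using me0 s1 unfolding s_def by simp
            also have "\<dots> \<le> (1/s) * s" using me hL s1 by (intro mult_right_mono) auto
            also have "\<dots> = 1" using s1 by simp
            finally show False using \<omega> by simp
          qed
        qed
        have mT: "measure M T \<le> 0"
        proof -
          have "measure M T \<le> (\<Sum>j\<in>{1..n}. measure M (\<Union>k\<in>{1..n}-{j}. {\<omega>\<in>space M. X j \<omega> = X k \<omega>}))"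
            unfolding T_def using eqs by (intro measure_UNION_le) auto
          also have "\<dots> \<le> (\<Sum>j\<in>{1..n}. \<Sum>k\<in>{1..n}-{j}. measure M {\<omega>\<in>space M. X j \<omega> = X k \<omega>})"
            using eqs by (intro sum_mono measure_UNION_le) auto
          also have "\<dots> = 0" using ties_null[OF PM ind dist] by (intro sum.neutral) auto
          finally show ?thesis by simp
        qed
        have mU: "measure M U \<le> 0"
        proof -
          have "measure M U \<le> (\<Sum>k\<in>{1..n}. measure M (X k -` (-{a..b}) \<inter> space M))"
            unfolding U_def using pre by (intro measure_UNION_le) (auto intro!: borel_comp)
          also have "\<dots> = 0" using outside_null[OF PM dist f0] by simp
          finally show ?thesis .
        qed
        have one: "measure M (\<Inter>k\<in>blk \<sigma>. X k -` (- bin t) \<inter> space M) \<le> exp (-(c * h * real q))"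
          if t: "t < m" for t \<sigma>
        proof -
          have pk: "measure M (X k -` (- bin t) \<inter> space M) \<le> 1 - c * h" for k
          proof -
            have "X k -` (- bin t) \<inter> space M = space M - (X k -` bin t \<inter> space M)" by auto
            hence "measure M (X k -` (- bin t) \<inter> space M) = 1 - measure M (X k -` bin t \<inter> space M)"
              using P.prob_compl[OF pre[OF binb(1)]] by simp
            moreover have "c * h \<le> measure M (X k -` bin t \<inter> space M)"
            proof -
              have "a + real (t+1)* h \<le> a + real m * h" using t h by (intro add_left_mono mult_right_mono) auto
              hence "a + real t * h + h \<le> b" using mh by (simp add: algebra_simps)
              moreover have "a \<le> a + real t * h" using h by simp
              ultimately have "c * h \<le> measure M (X k -` {a + real t * h .. a + real t * h + h} \<inter> space M)"
                using bin_prob[OF PM dist fge c] h by auto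
              moreover have "{a + real t * h .. a + real t * h + h} = bin t" unfolding bin_def by (simp add: algebra_simps)
              ultimately show ?thesis by simp
            qed
            ultimately show ?thesis by simp
          qed
          have "measure M (\<Inter>k\<in>blk \<sigma>. X k -` (- bin t) \<inter> space M) = (\<Prod>k\<in>blk \<sigma>. measure M (X k -` (- bin t) \<inter> space M))"
            by (rule block_miss[OF PM ind blkne(2) blkne(1) binb(1)])
          also have "\<dots> \<le> (\<Prod>k\<in>blk \<sigma>. 1 - c * h)"
            by (intro prod_mono) (use pk in auto)
          also have "\<dots> = (1 - c * h)^q" unfolding blk_def by simp
          also have "\<dots> \<le> (exp (-(c * h)))^q"
          proof (rule power_mono)
            show "1 - c * h \<le> exp (-(c * h))" using exp_ge_add_one_self[of "-(c * h)"] by simp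
            show "0 \<le> 1 - c * h" using pk[of 0] by (smt (verit) measure_nonneg)
          qed
          also have "\<dots> = exp (-(c * h * real q))" by (simp add: exp_of_nat_mult[symmetric] algebra_simps)
          finally show ?thesis .
        qed
        have mV: "measure M V \<le> real m * real p * exp (-(c * h * real q))"
        proof -
          have "measure M V \<le> (\<Sum>t\<in>{..<m}. measure M (\<Union>\<sigma>\<in>{..<p}. \<Inter>k\<in>blk \<sigma>. X k -` (- bin t) \<inter> space M))"
            unfolding V_def using pre binb blkne by (intro measure_UNION_le sets.finite_UN sets.finite_INT) auto
          also have "\<dots> \<le> (\<Sum>t\<in>{..<m}. \<Sum>\<sigma>\<in>{..<p}. measure M (\<Inter>k\<in>blk \<sigma>. X k -` (- bin t) \<inter> space M))"
            using pre binb blkne by (intro sum_mono measure_UNION_le sets.finite_INT) auto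
          also have "\<dots> \<le> (\<Sum>t\<in>{..<m}. \<Sum>\<sigma>\<in>{..<p}. exp (-(c * h * real q)))"
            using one by (intro sum_mono) auto
          also have "\<dots> = real m * real p * exp (-(c * h * real q))" by simp
          finally show ?thesis .
        qed
        have num: "real m * real p * exp (-(c * h * real q)) \<le> G / s"
          unfolding G_def h_def
          using numeric[OF s1 c d _ A1 mpos mle qr] np p3 s2 by (simp add: mult.assoc)
        have Gs: "G / s < \<epsilon>"
        proof -
          have "(G/\<epsilon>)^2 < s^2" using NG nN s2 by simp
          hence "G/\<epsilon> < s" using s1 by (smt (verit) power_mono)
          thus ?thesis using eps s1 by (simp add: field_simps)
        qed
        have "measure M {\<omega> \<in> space M. \<bar>max_err g (\<lambda>k. X k \<omega>) n p / (1 / sqrt (real n))\<bar> > 1}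
              \<le> measure M (T \<union> U \<union> V)"
          using sub Ts Us Vs by (intro P.finite_measure_mono) auto
        also have "\<dots> \<le> measure M (T \<union> U) + measure M V" using Ts Us Vs by (intro measure_Un_le) auto
        also have "\<dots> \<le> measure M T + measure M U + measure M V" using Ts Us by (simp add: measure_Un_le)
        also have "\<dots> \<le> G / s" using mT mU mV num by linarith
        finally show "measure M {\<omega> \<in> space M. \<bar>max_err g (\<lambda>k. X k \<omega>) n p / (1 / sqrt (real n))\<bar> > 1} < \<epsilon>"
          using Gs by linarith
      qed
    qed
  qed
qed


end
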